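(* Let $p$ be a prime, $a,b,c\in\mathbb{Z}_p$ with $a\neq 0$, and $P(x,y)=a+bx+cy$. Then $(\mathbb{Z}_p,* )$ with $x*y=P(x,y)$ is a quasigroup with the cross inverse property if and only if $bc\equiv 1\pmod p$.
   Context: $\mathbb{Z}_p$ is the field of integers modulo $p$. A groupoid $(G,\cdot)$ is a quasigroup if for all $u,v\in G$ the equations $u\cdot x=v$ and $y\cdot u=v$ have unique solutions. In a quasigroup, for each $x$ let $e_\rho(x)$ be the unique element with $x\cdot e_\rho(x)=x$, and $x^\rho$ the unique element with $x\cdot x^\rho=e_\rho(x)$. The cross inverse property means $(x\cdot y)\cdot x^\rho=y$ for all $x,y$. *)

theory Defs
  imports "HOL-Number_Theory.Number_Theory"
begin

definition quasigroup :: "'a set \<Rightarrow> ('a \<Rightarrow> 'a \<Rightarrow> 'a) \<Rightarrow> bool" where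
  "quasigroup G m \<longleftrightarrow>
     (\<forall>x\<in>G. \<forall>y\<in>G. m x y \<in> G) \<and>
     (\<forall>u\<in>G. \<forall>v\<in>G. (\<exists>!x. x \<in> G \<and> m u x = v) \<and> (\<exists>!y. y \<in> G \<and> m y u = v))"

definition e_rho :: "'a set \<Rightarrow> ('a \<Rightarrow> 'a \<Rightarrow> 'a) \<Rightarrow> 'a \<Rightarrow> 'a" where
  "e_rho G m x = (THE e. e \<in> G \<and> m x e = x)"

definition rho_inv :: "'a set \<Rightarrow> ('a \<Rightarrow> 'a \<Rightarrow> 'a) \<Rightarrow> 'a \<Rightarrow> 'a" where
  "rho_inv G m x = (THE r. r \<in> G \<and> m x r = e_rho G m x)"

definition cross_inverse_property :: "'a set \<Rightarrow> ('a \<Rightarrow> 'a \<Rightarrow> 'a) \<Rightarrow> bool" where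
  "cross_inverse_property G m \<longleftrightarrow>
     (\<forall>x\<in>G. \<forall>y\<in>G. m (m x y) (rho_inv G m x) = y)"

end

theory Submission
  imports Defs
begin

lemma tmod: "(p::int) dvd (t - t mod p)"
  by (simp add: minus_mod_eq_mult_div)

lemma tmod2: "(p::int) dvd (k*t - k*(t mod p))"
proof -
  have "p dvd k*(t - t mod p)" using tmod by (rule dvd_mult)
  thus ?thesis by (simp add: right_diff_distrib)
qed

lemma inner_mod: "((a::int) + b*(t mod p) + k) mod p = (a + b*t + k) mod p"
proof -
  have "p dvd (b*t - b*(t mod p))" by (rule tmod2)
  hence "p dvd ((a + b*(t mod p) + k) - (a + b*t + k))"
  proof -
    have "(a + b*(t mod p) + k) - (a + b*t + k) = -(b*t - b*(t mod p))" by simp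
    thus ?thesis using \<open>p dvd (b*t - b*(t mod p))\<close> by (simp only: dvd_minus_iff)
  qed
  thus ?thesis by (simp add: mod_eq_dvd_iff)
qed

lemma modeq_dvd: "((x::int) mod p = y mod p) \<longleftrightarrow> p dvd (x - y)"
  by (simp add: mod_eq_dvd_iff)

theorem mainTheorem16:
  fixes p a b c :: int
  assumes "prime p"
    and "a \<in> {0..<p}" and "b \<in> {0..<p}" and "c \<in> {0..<p}"
    and "a \<noteq> 0"
  shows "(quasigroup {0..<p} (\<lambda>x y. (a + b * x + c * y) mod p) \<and>
          cross_inverse_property {0..<p} (\<lambda>x y. (a + b * x + c * y) mod p))
         \<longleftrightarrow> [b * c = 1] (mod p)"
proof -
  define G where "G = {0..<p}"
  define m where "m = (\<lambda>x y. (a + b * x + c * y) mod p)"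
  have p1: "p > 1" using assms(1) prime_gt_1_int by blast
  have modid: "\<And>y. y \<in> G \<Longrightarrow> y mod p = y" unfolding G_def by auto
  have mG: "\<And>x y. m x y \<in> G" unfolding m_def G_def using p1 by auto
  show ?thesis unfolding G_def[symmetric] m_def[symmetric]
  proof
    assume H: "quasigroup G m \<and> cross_inverse_property G m"
    define r where "r = rho_inv G m 0"
    have g0: "0 \<in> G" and g1: "1 \<in> G" unfolding G_def using p1 by auto
    have e0: "m (m 0 0) r = 0" and e1: "m (m 0 1) r = 1"
      using H g0 g1 unfolding cross_inverse_property_def r_def by auto
    have "(a + b * ((a + c*0) mod p) + c*r) mod p = (a + b*(a+c*0) + c*r) mod p"
      by (rule inner_mod)
    hence "(a + b*a + c*r) mod p = 0 mod p" using e0 unfolding m_def by simp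
    hence d0: "p dvd (a + b*a + c*r - 0)" by (simp only: modeq_dvd)
    have "(a + b * ((a + c*1) mod p) + c*r) mod p = (a + b*(a+c*1) + c*r) mod p"
      by (rule inner_mod)
    hence "(a + b*(a+c) + c*r) mod p = 1 mod p" using e1 p1 unfolding m_def by simp
    hence d1: "p dvd (a + b*(a+c) + c*r - 1)" by (simp only: modeq_dvd)
    have "p dvd ((a + b*(a+c) + c*r - 1) - (a + b*a + c*r - 0))"
      using d1 d0 by (rule dvd_diff)
    moreover have "(a + b*(a+c) + c*r - 1) - (a + b*a + c*r - 0) = b*c - 1"
      by (simp add: algebra_simps)
    ultimately have "p dvd (b*c - 1)" by (simp only:)
    thus "[b * c = 1] (mod p)" by (simp only: cong_iff_dvd_diff)
  next
    assume bc: "[b * c = 1] (mod p)"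
    hence bcd: "p dvd (b*c - 1)" by (simp add: cong_iff_dvd_diff)
    have solR: "\<exists>!x. x \<in> G \<and> m u x = v" if "v \<in> G" for u v
    proof
      let ?x = "(b*(v - a - b*u)) mod p"
      have "p dvd ((a + b*u + c*?x) - v)"
      proof -
        have "p dvd (c*(b*(v - a - b*u)) - c*?x)"
          by (rule tmod2)
        moreover have "p dvd ((b*c - 1) * (v - a - b*u))" using bcd by simp
        ultimately have "p dvd ((b*c - 1) * (v - a - b*u) - (c*(b*(v - a - b*u)) - c*?x))"
          by (metis dvd_diff)
        moreover have "(b*c - 1) * (v - a - b*u) - (c*(b*(v - a - b*u)) - c*?x) = (a + b*u + c*?x) - v"
          by (simp add: algebra_simps)
        ultimately show ?thesis by simp
      qed
      hence "(a + b*u + c*?x) mod p = v mod p" by (simp add: modeq_dvd)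
      thus "?x \<in> G \<and> m u ?x = v" using modid[OF that] p1 unfolding m_def G_def by auto
    next
      fix x assume x: "x \<in> G \<and> m u x = v"
      have "(a + b*u + c*x) mod p = v mod p" using x modid[OF that] unfolding m_def by simp
      hence A: "p dvd (a + b*u + c*x - v)" by (simp add: modeq_dvd)
      have "p dvd (b*(a + b*u + c*x - v) - (b*c - 1)*x)" using A bcd by (intro dvd_diff) auto
      moreover have "b*(a + b*u + c*x - v) - (b*c - 1)*x = x - b*(v - a - b*u)"
        by (simp add: algebra_simps)
      ultimately have "p dvd (x - b*(v - a - b*u))" by simp
      hence "x mod p = (b*(v - a - b*u)) mod p" by (simp add: modeq_dvd)
      thus "x = (b*(v - a - b*u)) mod p" using modid x by simp
    qed
    have solL: "\<exists>!y. y \<in> G \<and> m y u = v" if "v \<in> G" for u v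
    proof
      let ?y = "(c*(v - a - c*u)) mod p"
      have "p dvd ((a + b*?y + c*u) - v)"
      proof -
        have "p dvd (b*(c*(v - a - c*u)) - b*?y)"
          by (rule tmod2)
        moreover have "p dvd ((b*c - 1) * (v - a - c*u))" using bcd by simp
        ultimately have "p dvd ((b*c - 1) * (v - a - c*u) - (b*(c*(v - a - c*u)) - b*?y))"
          by (metis dvd_diff)
        moreover have "(b*c - 1) * (v - a - c*u) - (b*(c*(v - a - c*u)) - b*?y) = (a + b*?y + c*u) - v"
          by (simp add: algebra_simps)
        ultimately show ?thesis by simp
      qed
      hence "(a + b*?y + c*u) mod p = v mod p" by (simp add: modeq_dvd)
      thus "?y \<in> G \<and> m ?y u = v" using modid[OF that] p1 unfolding m_def G_def by auto
    next
      fix y assume y: "y \<in> G \<and> m y u = v"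
      have "(a + b*y + c*u) mod p = v mod p" using y modid[OF that] unfolding m_def by simp
      hence A: "p dvd (a + b*y + c*u - v)" by (simp add: modeq_dvd)
      have "p dvd (c*(a + b*y + c*u - v) - (b*c - 1)*y)" using A bcd by (intro dvd_diff) auto
      moreover have "c*(a + b*y + c*u - v) - (b*c - 1)*y = y - c*(v - a - c*u)"
        by (simp add: algebra_simps)
      ultimately have "p dvd (y - c*(v - a - c*u))" by simp
      hence "y mod p = (c*(v - a - c*u)) mod p" by (simp add: modeq_dvd)
      thus "y = (c*(v - a - c*u)) mod p" using modid y by simp
    qed
    have Q: "quasigroup G m" unfolding quasigroup_def using mG solR solL by auto
    have C: "cross_inverse_property G m" unfolding cross_inverse_property_def
    proof (intro ballI)
      fix x y assume x: "x \<in> G" and y: "y \<in> G"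
      define e where "e = e_rho G m x"
      define r where "r = rho_inv G m x"
      have eP: "e \<in> G \<and> m x e = x" unfolding e_def e_rho_def
        by (rule theI'[OF solR[OF x]])
      have rP: "r \<in> G \<and> m x r = e" unfolding r_def rho_inv_def e_def[symmetric]
        by (rule theI'[OF solR]) (use eP in auto)
      have "(a + b*x + c*e) mod p = x mod p" using eP modid[OF x] unfolding m_def by simp
      hence E: "p dvd (a + b*x + c*e - x)" by (simp only: modeq_dvd)
      have "(a + b*x + c*r) mod p = e mod p" using rP modid eP unfolding m_def by simp
      hence R: "p dvd (a + b*x + c*r - e)" by (simp only: modeq_dvd)
      have "(a + b * ((a + b*x + c*y) mod p) + c*r) mod p = (a + b*(a + b*x + c*y) + c*r) mod p"
        by (rule inner_mod)
      moreover have "p dvd ((a + b*(a + b*x + c*y) + c*r) - y)"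
      proof -
        have "p dvd (R' + b*E' + (b*c - 1)*(y - e))" if "p dvd R'" "p dvd E'" for R' E'
          using that bcd by (intro dvd_add) auto
        from this[OF R E] show ?thesis
          by (rule back_subst[where P="\<lambda>t. p dvd t"]) (simp add: algebra_simps)
      qed
      ultimately have "(a + b * ((a + b*x + c*y) mod p) + c*r) mod p = y mod p"
        by (simp only: modeq_dvd[symmetric])
      thus "m (m x y) (rho_inv G m x) = y" using modid[OF y] unfolding m_def r_def by simp
    qed
    show "quasigroup G m \<and> cross_inverse_property G m" using Q C by simp
  qed
qed

end
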